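(* Let $n\ge2$, $k\ge0$, $\nu_1,\ldots,\nu_n>0$. The set of polynomials \[ \psi^{BG}_{j_1,\ldots,j_{n-1}}=CK_n^{BG}\Big(\big(L_+^{[n-1]}\big)^{j_{n-1}}CK_{n-1}^{BG}\Big(\cdots\big(L_+^{[2]}\big)^{j_2}CK_2^{BG}\big(x_1^{j_1}\big)\cdots\Big)\Big), \] where $(j_1,\ldots,j_{n-1})$ ranges over nonnegative integer tuples with $\sum_{\ell=1}^{n-1}j_\ell=k$, is a basis of $\mathcal{H}^{BG}_k(\mathbb{R}^n)$.
   Context: For $m\le n$: $L_-^{[m]}=\sum_{j=1}^m\big(x_j\partial_{x_j}^2+2\nu_j\partial_{x_j}\big)$, $L_+^{[m]}=\sum_{j=1}^m x_j$ (multiplication). $\mathcal{H}^{BG}_k(\mathbb{R}^n)$ is the space of real homogeneous degree-$k$ polynomials in $x_1,\ldots,x_n$ annihilated by $L_-^{[n]}$. For $2\le m\le n$ and a homogeneous polynomial $p$ of degree $d$ in $x_1,\ldots,x_{m-1}$, $CK_m^{BG}(p)=\Gamma(2\nu_m)\sum_{j=0}^d\frac{(-x_mL_-^{[m-1]})^j}{j!\,\Gamma(j+2\nu_m)}p$. *)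

theory Defs
  imports "HOL-Analysis.Analysis" "HOL-Library.Function_Algebras"
begin

text \<open>Real polynomials in variables x_1, x_2, ... are represented by their coefficient
functions: a polynomial p is a map from exponent vectors alpha (nat => nat, alpha i = exponent
of x_i) to real coefficients.\<close>

type_synonym rpoly = "(nat \<Rightarrow> nat) \<Rightarrow> real"

text \<open>p is a homogeneous polynomial of degree k in x_1..x_n (finitely many monomials follows).\<close>
definition hom_poly :: "nat \<Rightarrow> nat \<Rightarrow> rpoly \<Rightarrow> bool" where
  "hom_poly n k p \<longleftrightarrow>
     (\<forall>\<alpha>. p \<alpha> \<noteq> 0 \<longrightarrow> (\<forall>i. \<alpha> i \<noteq> 0 \<longrightarrow> i \<in> {1..n}) \<and> sum \<alpha> {1..n} = k)"

definition mulx :: "nat \<Rightarrow> rpoly \<Rightarrow> rpoly" where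
  "mulx i p = (\<lambda>\<alpha>. if 0 < \<alpha> i then p (\<alpha>(i := \<alpha> i - 1)) else 0)"

definition dx :: "nat \<Rightarrow> rpoly \<Rightarrow> rpoly" where
  "dx i p = (\<lambda>\<alpha>. real (\<alpha> i + 1) * p (\<alpha>(i := \<alpha> i + 1)))"

definition Lminus :: "(nat \<Rightarrow> real) \<Rightarrow> nat \<Rightarrow> rpoly \<Rightarrow> rpoly" where
  "Lminus \<nu> m p = (\<lambda>\<alpha>. \<Sum>j\<in>{1..m}. mulx j (dx j (dx j p)) \<alpha> + 2 * \<nu> j * dx j p \<alpha>)"

definition Lplus :: "nat \<Rightarrow> rpoly \<Rightarrow> rpoly" where
  "Lplus m p = (\<lambda>\<alpha>. \<Sum>j\<in>{1..m}. mulx j p \<alpha>)"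

definition x1pow :: "nat \<Rightarrow> rpoly" where
  "x1pow a = (\<lambda>\<alpha>. if \<alpha> = (\<lambda>_. 0)(1 := a) then 1 else 0)"

definition CK :: "(nat \<Rightarrow> real) \<Rightarrow> nat \<Rightarrow> nat \<Rightarrow> rpoly \<Rightarrow> rpoly" where
  "CK \<nu> m d p = (\<lambda>\<alpha>. Gamma (2 * \<nu> m) *
      (\<Sum>j\<in>{0..d}. ((\<lambda>q. (\<lambda>\<beta>. - mulx m (Lminus \<nu> (m - 1) q) \<beta>)) ^^ j) p \<alpha>
                     / (fact j * Gamma (real j + 2 * \<nu> m))))"

text \<open>The degree passed to CK_m is the degree
  j_1 + ... + j_{m-1} of its (homogeneous) argument.\<close>
fun psiG :: "(nat \<Rightarrow> real) \<Rightarrow> (nat \<Rightarrow> nat) \<Rightarrow> nat \<Rightarrow> rpoly" where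
  "psiG \<nu> jj 0 = 0"
| "psiG \<nu> jj (Suc 0) = x1pow (jj 1)"
| "psiG \<nu> jj (Suc (Suc 0)) = CK \<nu> 2 (jj 1) (psiG \<nu> jj 1)"
| "psiG \<nu> jj (Suc (Suc (Suc m))) =
     CK \<nu> (m + 3) (sum jj {1..m+2}) ((Lplus (m + 2) ^^ jj (m + 2)) (psiG \<nu> jj (m + 2)))"

definition HBG :: "(nat \<Rightarrow> real) \<Rightarrow> nat \<Rightarrow> nat \<Rightarrow> rpoly set" where
  "HBG \<nu> n k = {p. hom_poly n k p \<and> Lminus \<nu> n p = 0}"

definition Jset :: "nat \<Rightarrow> nat \<Rightarrow> (nat \<Rightarrow> nat) set" where
  "Jset n k = {jj. (\<forall>i. i \<notin> {1..n-1} \<longrightarrow> jj i = 0) \<and> sum jj {1..n-1} = k}"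

definition pscale :: "real \<Rightarrow> rpoly \<Rightarrow> rpoly" where
  "pscale c p = (\<lambda>\<alpha>. c * p \<alpha>)"

definition is_basis_family :: "('i \<Rightarrow> rpoly) \<Rightarrow> 'i set \<Rightarrow> rpoly set \<Rightarrow> bool" where
  "is_basis_family b I V \<longleftrightarrow>
     b ` I \<subseteq> V \<and> inj_on b I \<and> \<not> module.dependent pscale (b ` I) \<and> module.span pscale (b ` I) = V"

end

theory Submission
  imports Defs
begin


lemma sum_fun_app: "(sum f A) x = sum (\<lambda>a. f a x) A"
  by (induction A rule: infinite_finite_induct) auto

lemma pscale_app: "pscale c p a = c * p a" by (simp add: pscale_def)

lemma Lminus_pt: "Lminus \<nu> m q \<alpha> =
  (\<Sum>j\<in>{1..m}. (real (\<alpha> j) + 1) * (real (\<alpha> j) + 2 * \<nu> j) * q (\<alpha>(j := \<alpha> j + 1)))"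
  unfolding Lminus_def
proof (rule sum.cong[OF refl])
  fix j
  show "mulx j (dx j (dx j q)) \<alpha> + 2 * \<nu> j * dx j q \<alpha> =
    (real (\<alpha> j) + 1) * (real (\<alpha> j) + 2 * \<nu> j) * q (\<alpha>(j := \<alpha> j + 1))"
    by (cases "\<alpha> j") (auto simp: mulx_def dx_def algebra_simps)
qed

lemma Lplus_pt: "Lplus m q \<alpha> = (\<Sum>i\<in>{1..m}. if 0 < \<alpha> i then q (\<alpha>(i := \<alpha> i - 1)) else 0)"
  by (simp add: Lplus_def mulx_def)

definition lin :: "(rpoly \<Rightarrow> rpoly) \<Rightarrow> bool" where
  "lin f \<longleftrightarrow> (\<forall>p q. f (p+q) = f p + f q) \<and> (\<forall>c p. f (pscale c p) = pscale c (f p))"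

lemma lin_Lminus: "lin (Lminus \<nu> m)"
  by (simp add: lin_def Lminus_pt fun_eq_iff algebra_simps sum.distrib sum_distrib_left pscale_app)

lemma lin_Lplus: "lin (Lplus m)"
proof -
  have *: "\<And>p q x A. (\<Sum>i\<in>A. if 0 < x i then p (x(i := x i - Suc 0)) + q (x(i := x i - Suc 0)) else 0) =
        (\<Sum>i\<in>A. if 0 < x i then p (x(i := x i - Suc 0)) else 0) +
        (\<Sum>i\<in>A. if 0 < x i then q (x(i := x i - Suc 0)) else 0)"
    by (auto simp add: sum.distrib[symmetric] intro!: sum.cong)
  show ?thesis
    apply (simp add: lin_def Lplus_pt fun_eq_iff sum_distrib_left if_distrib pscale_app cong: if_cong)
    using * by blast
qed

lemma lin_mulx: "lin (mulx m)"
  by (simp add: lin_def mulx_def fun_eq_iff pscale_app)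

lemma lin_zero: "lin f \<Longrightarrow> f 0 = 0"
  unfolding lin_def by (metis add_cancel_right_right add_0)

lemma lin_add: "lin f \<Longrightarrow> f (p + q) = f p + f q" by (simp add: lin_def)
lemma lin_scale: "lin f \<Longrightarrow> f (pscale c p) = pscale c (f p)" by (simp add: lin_def)

lemma lin_sum: "lin f \<Longrightarrow> f (sum g A) = (\<Sum>a\<in>A. f (g a))"
  by (induction A rule: infinite_finite_induct) (auto simp: lin_zero lin_add)

lemma lin_pow: "lin f \<Longrightarrow> lin (f ^^ n)"
  by (induction n) (auto simp: lin_def)

lemma lin_comp: "lin f \<Longrightarrow> lin g \<Longrightarrow> lin (f \<circ> g)"
  by (auto simp: lin_def)

lemma lin_diff: "lin f \<Longrightarrow> f (p - q) = f p - f q"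
  by (metis add_diff_cancel lin_add diff_add_cancel)

lemma sum_split_diag:
  assumes "finite I" "j \<in> I"
  shows "(\<Sum>i\<in>I. g i) = g j + (\<Sum>i\<in>I. if i = j then 0 else g i)"
proof -
  have "(\<Sum>i\<in>I. g i) = (\<Sum>i\<in>I. (if i = j then g i else 0) + (if i = j then 0 else g i))"
    by (rule sum.cong) auto
  also have "\<dots> = g j + (\<Sum>i\<in>I. if i = j then 0 else g i)"
    using assms by (simp add: sum.distrib)
  finally show ?thesis .
qed

definition Ssum :: "(nat \<Rightarrow> real) \<Rightarrow> nat \<Rightarrow> real" where
  "Ssum \<nu> m = (\<Sum>j\<in>{1..m}. \<nu> j)"

lemma commutator_pt:
  "Lminus \<nu> m (Lplus m q) \<alpha> = Lplus m (Lminus \<nu> m q) \<alpha>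
     + 2 * (real (sum \<alpha> {1..m}) + Ssum \<nu> m) * q \<alpha>"
proof -
  let ?I = "{1..m::nat}"
  define A where "A j = (real (\<alpha> j) + 1) * (real (\<alpha> j) + 2 * \<nu> j)" for j
  define H where "H i j = (if i = j then 0 else if 0 < \<alpha> i
       then A j * q ((\<alpha>(j := \<alpha> j + 1))(i := \<alpha> i - 1)) else 0)" for i j
  have L: "Lminus \<nu> m (Lplus m q) \<alpha> = (\<Sum>j\<in>?I. A j * q \<alpha> + (\<Sum>i\<in>?I. H i j))"
    unfolding Lminus_pt
  proof (rule sum.cong[OF refl])
    fix j assume j: "j \<in> ?I"
    have e: "Lplus m q (\<alpha>(j := \<alpha> j + 1)) = q \<alpha> + (\<Sum>i\<in>?I. if i = j then 0 else
       (if 0 < \<alpha> i then q ((\<alpha>(j := \<alpha> j + 1))(i := \<alpha> i - 1)) else 0))"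
      unfolding Lplus_pt
      by (subst sum_split_diag[OF _ j]) (auto intro!: sum.cong)
    have "A j * Lplus m q (\<alpha>(j := \<alpha> j + 1)) = A j * q \<alpha> + (\<Sum>i\<in>?I. A j * (if i = j then 0 else
       (if 0 < \<alpha> i then q ((\<alpha>(j := \<alpha> j + 1))(i := \<alpha> i - 1)) else 0)))"
      unfolding e by (simp add: distrib_left sum_distrib_left)
    also have "(\<Sum>i\<in>?I. A j * (if i = j then 0 else
       (if 0 < \<alpha> i then q ((\<alpha>(j := \<alpha> j + 1))(i := \<alpha> i - 1)) else 0))) = (\<Sum>i\<in>?I. H i j)"
      by (rule sum.cong) (auto simp: H_def)
    finally show "(real (\<alpha> j) + 1) * (real (\<alpha> j) + 2 * \<nu> j) * Lplus m q (\<alpha>(j := \<alpha> j + 1))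
      = A j * q \<alpha> + (\<Sum>i\<in>?I. H i j)"
      unfolding A_def .
  qed
  define B where "B i = real (\<alpha> i) * (real (\<alpha> i) - 1 + 2 * \<nu> i)" for i
  have R: "Lplus m (Lminus \<nu> m q) \<alpha> = (\<Sum>i\<in>?I. (if 0 < \<alpha> i then B i * q \<alpha> else 0) + (\<Sum>j\<in>?I. H i j))"
    unfolding Lplus_pt
  proof (rule sum.cong[OF refl])
    fix i assume i: "i \<in> ?I"
    show "(if 0 < \<alpha> i then Lminus \<nu> m q (\<alpha>(i := \<alpha> i - 1)) else 0) =
         (if 0 < \<alpha> i then B i * q \<alpha> else 0) + (\<Sum>j\<in>?I. H i j)"
    proof (cases "0 < \<alpha> i")
      case False
      then show ?thesis by (simp add: H_def sum.neutral)
    next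
      case True
      have "Lminus \<nu> m q (\<alpha>(i := \<alpha> i - 1)) = B i * q \<alpha> + (\<Sum>j\<in>?I. H i j)"
        unfolding Lminus_pt
        apply (subst sum_split_diag[OF _ i])
         apply simp
        apply (rule arg_cong2[where f="(+)"])
        using True apply (simp add: B_def of_nat_diff)
        apply (rule sum.cong[OF refl])
        using True apply (auto simp: H_def A_def fun_upd_twist)
        done
      then show ?thesis using True by simp
    qed
  qed
  have swap: "(\<Sum>j\<in>?I. \<Sum>i\<in>?I. H i j) = (\<Sum>i\<in>?I. \<Sum>j\<in>?I. H i j)"
    by (rule sum.swap)
  have AB: "A j * q \<alpha> - (if 0 < \<alpha> j then B j * q \<alpha> else 0) = (2 * real (\<alpha> j) + 2 * \<nu> j) * q \<alpha>" for j
    by (auto simp: A_def B_def algebra_simps)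
  have "Lminus \<nu> m (Lplus m q) \<alpha> - Lplus m (Lminus \<nu> m q) \<alpha>
      = (\<Sum>j\<in>?I. A j * q \<alpha> - (if 0 < \<alpha> j then B j * q \<alpha> else 0))"
    unfolding L R using swap by (simp add: sum.distrib sum_subtractf)
  also have "\<dots> = (\<Sum>j\<in>?I. (2 * real (\<alpha> j) + 2 * \<nu> j) * q \<alpha>)"
    using AB by simp
  also have "\<dots> = 2 * (real (sum \<alpha> {1..m}) + Ssum \<nu> m) * q \<alpha>"
    by (simp add: Ssum_def sum_distrib_right sum.distrib sum_distrib_left algebra_simps)
  finally show ?thesis by simp
qed

lemma sum_upd_nat:
  assumes "finite A" "i \<in> A"
  shows "sum (\<alpha>(i := v)) A + \<alpha> i = sum \<alpha> A + (v::nat)"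
proof -
  have "sum (\<alpha>(i := v)) A = v + sum (\<alpha>(i := v)) (A - {i})"
    using sum.remove[OF assms, of "\<alpha>(i := v)"] by simp
  moreover have "sum (\<alpha>(i := v)) (A - {i}) = sum \<alpha> (A - {i})"
    by (rule sum.cong) auto
  moreover have "sum \<alpha> A = \<alpha> i + sum \<alpha> (A - {i})"
    using sum.remove[OF assms, of \<alpha>] by simp
  ultimately show ?thesis by simp
qed

lemma hom_Lplus:
  assumes "hom_poly m k q" shows "hom_poly m (Suc k) (Lplus m q)"
  unfolding hom_poly_def
proof (intro allI impI)
  fix \<alpha> assume "Lplus m q \<alpha> \<noteq> 0"
  then obtain i where "i \<in> {1..m}" "(if 0 < \<alpha> i then q (\<alpha>(i := \<alpha> i - 1)) else 0) \<noteq> 0"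
    unfolding Lplus_pt by (rule sum.not_neutral_contains_not_neutral)
  then have i: "i \<in> {1..m}" "0 < \<alpha> i" "q (\<alpha>(i := \<alpha> i - 1)) \<noteq> 0"
    by (auto split: if_splits)
  then have h: "(\<forall>l. (\<alpha>(i := \<alpha> i - 1)) l \<noteq> 0 \<longrightarrow> l \<in> {1..m}) \<and> sum (\<alpha>(i := \<alpha> i - 1)) {1..m} = k"
    using assms unfolding hom_poly_def by blast
  have "\<forall>l. \<alpha> l \<noteq> 0 \<longrightarrow> l \<in> {1..m}"
  proof (intro allI impI)
    fix l assume "\<alpha> l \<noteq> 0"
    then show "l \<in> {1..m}" using h i by (cases "l = i") auto
  qed
  moreover have "sum \<alpha> {1..m} = Suc k"
    using sum_upd_nat[of "{1..m}" i \<alpha> "\<alpha> i - 1"] h i by simp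
  ultimately show "(\<forall>l. \<alpha> l \<noteq> 0 \<longrightarrow> l \<in> {1..m}) \<and> sum \<alpha> {1..m} = Suc k" by blast
qed

lemma hom_Lminus_aux:
  assumes "hom_poly m k q" "Lminus \<nu> m q \<alpha> \<noteq> 0"
  shows "(\<forall>l. \<alpha> l \<noteq> 0 \<longrightarrow> l \<in> {1..m}) \<and> Suc (sum \<alpha> {1..m}) = k"
proof -
  obtain j where "j \<in> {1..m}" "(real (\<alpha> j) + 1) * (real (\<alpha> j) + 2 * \<nu> j) * q (\<alpha>(j := \<alpha> j + 1)) \<noteq> 0"
    using assms(2) unfolding Lminus_pt by (rule sum.not_neutral_contains_not_neutral)
  then have j: "j \<in> {1..m}" "q (\<alpha>(j := \<alpha> j + 1)) \<noteq> 0" by auto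
  then have h: "(\<forall>l. (\<alpha>(j := \<alpha> j + 1)) l \<noteq> 0 \<longrightarrow> l \<in> {1..m}) \<and> sum (\<alpha>(j := \<alpha> j + 1)) {1..m} = k"
    using assms unfolding hom_poly_def by blast
  have "\<forall>l. \<alpha> l \<noteq> 0 \<longrightarrow> l \<in> {1..m}"
  proof (intro allI impI)
    fix l assume "\<alpha> l \<noteq> 0"
    then show "l \<in> {1..m}" using h j by (cases "l = j") auto
  qed
  moreover have "Suc (sum \<alpha> {1..m}) = k"
    using sum_upd_nat[of "{1..m}" j \<alpha> "\<alpha> j + 1"] h j by simp
  ultimately show ?thesis by blast
qed

lemma hom_Lminus:
  assumes "hom_poly m k q" shows "hom_poly m (k - 1) (Lminus \<nu> m q)"
  unfolding hom_poly_def
proof (intro allI impI)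
  fix \<alpha> assume "Lminus \<nu> m q \<alpha> \<noteq> 0"
  from hom_Lminus_aux[OF assms this] show "(\<forall>i. \<alpha> i \<noteq> 0 \<longrightarrow> i \<in> {1..m}) \<and> sum \<alpha> {1..m} = k - 1"
    by auto
qed

lemma Lminus_hom0:
  assumes "hom_poly m 0 q" shows "Lminus \<nu> m q = 0"
proof (rule ext, rule ccontr)
  fix \<alpha> assume "Lminus \<nu> m q \<alpha> \<noteq> 0 \<alpha>"
  then have "Lminus \<nu> m q \<alpha> \<noteq> 0" by simp
  from hom_Lminus_aux[OF assms this] show False by simp
qed

lemma commutator:
  assumes "hom_poly m k q"
  shows "Lminus \<nu> m (Lplus m q) = Lplus m (Lminus \<nu> m q) + pscale (2 * (real k + Ssum \<nu> m)) q"
proof (rule ext)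
  fix \<alpha>
  have "q \<alpha> \<noteq> 0 \<Longrightarrow> sum \<alpha> {1..m} = k" using assms unfolding hom_poly_def by blast
  then have "2 * (real (sum \<alpha> {1..m}) + Ssum \<nu> m) * q \<alpha> = 2 * (real k + Ssum \<nu> m) * q \<alpha>"
    by (cases "q \<alpha> = 0") auto
  then show "Lminus \<nu> m (Lplus m q) \<alpha> = (Lplus m (Lminus \<nu> m q) + pscale (2 * (real k + Ssum \<nu> m)) q) \<alpha>"
    using commutator_pt[of \<nu> m q \<alpha>] by (simp add: pscale_app)
qed

lemma hom_Lplus_pow: "hom_poly m k q \<Longrightarrow> hom_poly m (k + j) ((Lplus m ^^ j) q)"
  by (induction j) (auto intro: hom_Lplus)

lemma pscale_0[simp]: "pscale 0 p = 0" by (simp add: pscale_def fun_eq_iff)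
lemma pscale_add: "pscale a p + pscale b p = pscale (a + b) p"
  by (simp add: pscale_def fun_eq_iff algebra_simps)

definition kap :: "(nat \<Rightarrow> real) \<Rightarrow> nat \<Rightarrow> nat \<Rightarrow> nat \<Rightarrow> real" where
  "kap \<nu> m e j = real j * (2 * real e + real j - 1 + 2 * Ssum \<nu> m)"

lemma Lminus_Lplus_pow:
  assumes "hom_poly m e h" "Lminus \<nu> m h = 0"
  shows "Lminus \<nu> m ((Lplus m ^^ j) h) = pscale (kap \<nu> m e j) ((Lplus m ^^ (j - 1)) h)"
proof (induction j)
  case 0
  then show ?case using assms by (simp add: kap_def pscale_def fun_eq_iff)
next
  case (Suc j)
  have hj: "hom_poly m (e + j) ((Lplus m ^^ j) h)" by (rule hom_Lplus_pow[OF assms(1)])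
  have "Lminus \<nu> m ((Lplus m ^^ Suc j) h) = Lplus m (Lminus \<nu> m ((Lplus m ^^ j) h))
      + pscale (2 * (real (e + j) + Ssum \<nu> m)) ((Lplus m ^^ j) h)"
    using commutator[OF hj] by simp
  also have "Lplus m (Lminus \<nu> m ((Lplus m ^^ j) h)) = pscale (kap \<nu> m e j) ((Lplus m ^^ j) h)"
  proof (cases j)
    case 0
    then show ?thesis using assms(2) by (simp add: kap_def lin_zero[OF lin_Lplus])
  next
    case (Suc j')
    then show ?thesis using Suc.IH by (simp add: lin_scale[OF lin_Lplus])
  qed
  finally have "Lminus \<nu> m ((Lplus m ^^ Suc j) h) = pscale (kap \<nu> m e j + 2 * (real (e + j) + Ssum \<nu> m)) ((Lplus m ^^ j) h)"
    by (simp add: pscale_add)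
  moreover have "kap \<nu> m e j + 2 * (real (e + j) + Ssum \<nu> m) = kap \<nu> m e (Suc j)"
    by (simp add: kap_def algebra_simps)
  ultimately show ?case by simp
qed



lemma Lminus_split:
  assumes "1 \<le> m"
  shows "Lminus \<nu> m q \<beta> = Lminus \<nu> (m - 1) q \<beta>
     + (real (\<beta> m) + 1) * (real (\<beta> m) + 2 * \<nu> m) * q (\<beta>(m := \<beta> m + 1))"
proof -
  have e: "{1..m} = insert m {1..m-1}" using assms by auto
  have "m \<notin> {1..m-1}" by auto
  then show ?thesis unfolding Lminus_pt e by (simp add: add.commute)
qed

lemma Lminus_slice:
  assumes "M < m" "\<And>\<beta>. q \<beta> = F (\<beta> m) (\<beta>(m := 0))"
  shows "Lminus \<nu> M q \<beta> = Lminus \<nu> M (F (\<beta> m)) (\<beta>(m := 0))"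
  unfolding Lminus_pt
proof (rule sum.cong[OF refl])
  fix i assume i: "i \<in> {1..M}"
  then have "i \<noteq> m" using assms(1) by auto
  then have "q (\<beta>(i := \<beta> i + 1)) = F (\<beta> m) ((\<beta>(m := 0))(i := (\<beta>(m := 0)) i + 1))"
    by (simp add: assms(2) fun_upd_twist)
  then show "(real (\<beta> i) + 1) * (real (\<beta> i) + 2 * \<nu> i) * q (\<beta>(i := \<beta> i + 1)) =
    (real ((\<beta>(m := 0)) i) + 1) * (real ((\<beta>(m := 0)) i) + 2 * \<nu> i) * F (\<beta> m) ((\<beta>(m := 0))(i := (\<beta>(m := 0)) i + 1))"
    using \<open>i \<noteq> m\<close> by simp
qed

lemma hom_nox: "hom_poly M d p \<Longrightarrow> M < m \<Longrightarrow> p \<beta> \<noteq> 0 \<Longrightarrow> \<beta> m = 0"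
  unfolding hom_poly_def by fastforce

lemma T_pow:
  assumes "hom_poly (m - 1) d p" "1 \<le> m"
  shows "(((\<lambda>q. (\<lambda>\<beta>. - mulx m (Lminus \<nu> (m - 1) q) \<beta>)) ^^ j) p) \<alpha> =
     (if \<alpha> m = j then (-1) ^ j * ((Lminus \<nu> (m - 1)) ^^ j) p (\<alpha>(m := 0)) else 0)"
proof (induction j arbitrary: \<alpha>)
  case 0
  show ?case
  proof (cases "\<alpha> m = 0")
    case True
    then show ?thesis by (simp add: fun_upd_idem)
  next
    case False
    then show ?thesis using hom_nox[OF assms(1), of m \<alpha>] assms(2) by auto
  qed
next
  case (Suc j)
  let ?T = "\<lambda>q. (\<lambda>\<beta>. - mulx m (Lminus \<nu> (m - 1) q) \<beta>)"
  let ?L = "Lminus \<nu> (m - 1)"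
  define F where "F a = (if a = j then pscale ((-1) ^ j) ((?L ^^ j) p) else 0)" for a
  have sl: "(?T ^^ j) p \<beta> = F (\<beta> m) (\<beta>(m := 0))" for \<beta>
    using Suc.IH[of \<beta>] by (simp add: F_def pscale_app)
  have Lq: "?L ((?T ^^ j) p) \<beta> = ?L (F (\<beta> m)) (\<beta>(m := 0))" for \<beta>
    by (rule Lminus_slice[where M="m-1" and m=m and F=F]) (use assms(2) sl in auto)
  show ?case
  proof (cases "0 < \<alpha> m")
    case False
    then show ?thesis by (simp add: mulx_def)
  next
    case True
    have "(?T ^^ Suc j) p \<alpha> = - ?L ((?T ^^ j) p) (\<alpha>(m := \<alpha> m - 1))"
      using True by (simp add: mulx_def)
    also have "\<dots> = - ?L (F (\<alpha> m - 1)) (\<alpha>(m := 0))"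
      using Lq[of "\<alpha>(m := \<alpha> m - 1)"] by simp
    also have "\<dots> = (if \<alpha> m = Suc j then (-1) ^ Suc j * (?L ^^ Suc j) p (\<alpha>(m := 0)) else 0)"
      using True by (auto simp: F_def lin_scale[OF lin_Lminus] lin_zero[OF lin_Lminus] pscale_app)
    finally show ?thesis .
  qed
qed


definition w :: "(nat \<Rightarrow> real) \<Rightarrow> nat \<Rightarrow> nat \<Rightarrow> real" where
  "w \<nu> m a = Gamma (2 * \<nu> m) * (-1) ^ a / (fact a * Gamma (real a + 2 * \<nu> m))"

lemma CK_closed:
  assumes "hom_poly (m - 1) d p" "1 \<le> m"
  shows "CK \<nu> m d p \<alpha> = (if \<alpha> m \<le> d then w \<nu> m (\<alpha> m) * ((Lminus \<nu> (m - 1)) ^^ (\<alpha> m)) p (\<alpha>(m := 0)) else 0)"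
proof -
  have "CK \<nu> m d p \<alpha> = Gamma (2 * \<nu> m) * (\<Sum>j\<in>{0..d}. if j = \<alpha> m then
      (-1) ^ j * ((Lminus \<nu> (m - 1)) ^^ j) p (\<alpha>(m := 0)) / (fact j * Gamma (real j + 2 * \<nu> m)) else 0)"
  proof -
    have e: "\<And>j. (if \<alpha> m = j then (-1) ^ j * ((Lminus \<nu> (m - 1)) ^^ j) p (\<alpha>(m := 0)) else 0) / (fact j * Gamma (real j + 2 * \<nu> m))
      = (if j = \<alpha> m then (-1) ^ j * ((Lminus \<nu> (m - 1)) ^^ j) p (\<alpha>(m := 0)) / (fact j * Gamma (real j + 2 * \<nu> m)) else 0)"
      by auto
    show ?thesis unfolding CK_def T_pow[OF assms] e ..
  qed
  also have "\<dots> = (if \<alpha> m \<le> d then w \<nu> m (\<alpha> m) * ((Lminus \<nu> (m - 1)) ^^ (\<alpha> m)) p (\<alpha>(m := 0)) else 0)"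
    by (simp add: sum.delta w_def)
  finally show ?thesis .
qed

lemma Gamma_pos_nu: "0 < (v::real) \<Longrightarrow> 0 < Gamma (real a + 2 * v)"
  by (rule Gamma_real_pos) simp

lemma w0: "0 < \<nu> m \<Longrightarrow> w \<nu> m 0 = 1"
proof -
  assume "0 < \<nu> m"
  then have "0 < Gamma (2 * \<nu> m)" by simp
  then show ?thesis by (simp add: w_def)
qed

lemma w_rec: "0 < \<nu> m \<Longrightarrow> w \<nu> m a + (real a + 1) * (real a + 2 * \<nu> m) * w \<nu> m (Suc a) = 0"
proof -
  assume pos: "0 < \<nu> m"
  have p2: "0 < real a + 2 * \<nu> m" using pos by simp
  then have ni: "real a + 2 * \<nu> m \<notin> \<int>\<^sub>\<le>\<^sub>0" by auto
  have g: "Gamma (real (Suc a) + 2 * \<nu> m) = (real a + 2 * \<nu> m) * Gamma (real a + 2 * \<nu> m)"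
    using Gamma_plus1[OF ni] by (simp add: algebra_simps)
  have p1: "0 < Gamma (real a + 2 * \<nu> m)" using Gamma_pos_nu[OF pos] by blast
  have p2: "0 < real a + 2 * \<nu> m" using pos by simp
  have aux: "X / (F * G) + (r + 1) * c * ((- X) / ((r + 1) * F * (c * G))) = 0"
    if "0 \<le> r" "0 < c" "0 < G" "0 < F" for X F G r c :: real
  proof -
    have "(r + 1) * c * ((- X) / ((r + 1) * F * (c * G))) = ((r + 1) * c) * (- X) / (((r + 1) * c) * (F * G))"
      by (simp only: times_divide_eq_right) (simp add: mult_ac)
    also have "\<dots> = - X / (F * G)" using that by (subst mult_divide_mult_cancel_left) auto
    finally show ?thesis by simp
  qed
  have f: "fact (Suc a) = (real a + 1) * (fact a :: real)" by (simp add: algebra_simps)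
  have "w \<nu> m (Suc a) = (- (Gamma (2 * \<nu> m) * (-1) ^ a)) / ((real a + 1) * fact a * ((real a + 2 * \<nu> m) * Gamma (real a + 2 * \<nu> m)))"
    unfolding w_def g f by simp
  moreover have "w \<nu> m a = (Gamma (2 * \<nu> m) * (-1) ^ a) / (fact a * Gamma (real a + 2 * \<nu> m))"
    unfolding w_def by simp
  ultimately show ?thesis using aux[of "real a" "real a + 2 * \<nu> m" "Gamma (real a + 2 * \<nu> m)" "fact a"] p1 p2
    by simp
qed

lemma CK_restrict:
  assumes "hom_poly (m - 1) d p" "1 \<le> m" "0 < \<nu> m" "\<alpha> m = 0"
  shows "CK \<nu> m d p \<alpha> = p \<alpha>"
proof -
  have "\<alpha>(m := 0) = \<alpha>" using assms(4) by (simp add: fun_upd_idem)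
  then show ?thesis unfolding CK_closed[OF assms(1,2)] using assms(3,4) w0[of \<nu> m] by simp
qed

lemma Lminus_pow_hom: "hom_poly M d p \<Longrightarrow> hom_poly M (d - j) ((Lminus \<nu> M ^^ j) p)"
proof (induction j)
  case 0
  then show ?case by simp
next
  case (Suc j)
  have "hom_poly M (d - j - 1) (Lminus \<nu> M ((Lminus \<nu> M ^^ j) p))"
    by (rule hom_Lminus[OF Suc.IH[OF Suc.prems]])
  moreover have "d - j - 1 = d - Suc j" by simp
  ultimately show ?case by simp
qed

lemma Lminus_pow_vanish: "hom_poly M d p \<Longrightarrow> (Lminus \<nu> M ^^ Suc d) p = 0"
proof -
  assume h: "hom_poly M d p"
  have "hom_poly M 0 ((Lminus \<nu> M ^^ d) p)" using Lminus_pow_hom[where j=d, OF h] by simp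
  from Lminus_hom0[OF this] show ?thesis by simp
qed

lemma CK_hom:
  assumes "hom_poly (m - 1) d p" "1 \<le> m"
  shows "hom_poly m d (CK \<nu> m d p)"
  unfolding hom_poly_def
proof (intro allI impI)
  fix \<alpha> assume nz: "CK \<nu> m d p \<alpha> \<noteq> 0"
  let ?a = "\<alpha> m"
  have a: "?a \<le> d" and nz2: "((Lminus \<nu> (m - 1)) ^^ ?a) p (\<alpha>(m := 0)) \<noteq> 0"
    using nz unfolding CK_closed[OF assms] by (auto split: if_splits)
  have h: "hom_poly (m - 1) (d - ?a) (((Lminus \<nu> (m - 1)) ^^ ?a) p)"
    by (rule Lminus_pow_hom[OF assms(1)])
  then have sup: "\<forall>i. (\<alpha>(m := 0)) i \<noteq> 0 \<longrightarrow> i \<in> {1..m-1}" and sm: "sum (\<alpha>(m := 0)) {1..m-1} = d - ?a"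
    using nz2 unfolding hom_poly_def by blast+
  have "\<forall>i. \<alpha> i \<noteq> 0 \<longrightarrow> i \<in> {1..m}"
  proof (intro allI impI)
    fix i assume "\<alpha> i \<noteq> 0"
    show "i \<in> {1..m}"
    proof (cases "i = m")
      case True then show ?thesis using assms(2) by simp
    next
      case False
      then have "(\<alpha>(m := 0)) i \<noteq> 0" using \<open>\<alpha> i \<noteq> 0\<close> by simp
      then have "i \<in> {1..m-1}" using sup by blast
      then show ?thesis by auto
    qed
  qed
  moreover have "sum \<alpha> {1..m} = d"
  proof -
    have e: "{1..m} = insert m {1..m-1}" using assms(2) by auto
    have nm: "m \<notin> {1..m-1}" by auto
    have "sum (\<alpha>(m := 0)) {1..m-1} = sum \<alpha> {1..m-1}" by (rule sum.cong) auto
    then show ?thesis unfolding e using nm sm a by simp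
  qed
  ultimately show "(\<forall>i. \<alpha> i \<noteq> 0 \<longrightarrow> i \<in> {1..m}) \<and> sum \<alpha> {1..m} = d" by blast
qed

lemma CK_null:
  assumes "hom_poly (m - 1) d p" "1 \<le> m" "0 < \<nu> m"
  shows "Lminus \<nu> m (CK \<nu> m d p) = 0"
proof (rule ext)
  fix \<beta>
  let ?L = "Lminus \<nu> (m - 1)"
  define F where "F a = (if a \<le> d then pscale (w \<nu> m a) ((?L ^^ a) p) else 0)" for a
  have sl: "CK \<nu> m d p \<gamma> = F (\<gamma> m) (\<gamma>(m := 0))" for \<gamma>
    unfolding CK_closed[OF assms(1,2)] F_def by (simp add: pscale_app)
  have L1: "?L (CK \<nu> m d p) \<beta> = ?L (F (\<beta> m)) (\<beta>(m := 0))"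
    by (rule Lminus_slice[where M="m-1" and m=m and F=F]) (use assms(2) sl in auto)
  also have "\<dots> = (if \<beta> m \<le> d then w \<nu> m (\<beta> m) * (?L ^^ Suc (\<beta> m)) p (\<beta>(m := 0)) else 0)"
    by (simp add: F_def lin_scale[OF lin_Lminus] lin_zero[OF lin_Lminus] pscale_app)
  finally have L1': "?L (CK \<nu> m d p) \<beta> = (if \<beta> m \<le> d then w \<nu> m (\<beta> m) * (?L ^^ Suc (\<beta> m)) p (\<beta>(m := 0)) else 0)" .
  have L2: "CK \<nu> m d p (\<beta>(m := \<beta> m + 1)) = (if Suc (\<beta> m) \<le> d then w \<nu> m (Suc (\<beta> m)) * (?L ^^ Suc (\<beta> m)) p (\<beta>(m := 0)) else 0)"
    unfolding CK_closed[OF assms(1,2)] by simp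
  have "Lminus \<nu> m (CK \<nu> m d p) \<beta> = 0"
  proof (cases "Suc (\<beta> m) \<le> d")
    case True
    define X where "X = (?L ^^ Suc (\<beta> m)) p (\<beta>(m := 0))"
    define c where "c = (real (\<beta> m) + 1) * (real (\<beta> m) + 2 * \<nu> m)"
    have "Lminus \<nu> m (CK \<nu> m d p) \<beta> = w \<nu> m (\<beta> m) * X + c * (w \<nu> m (Suc (\<beta> m)) * X)"
      unfolding Lminus_split[OF assms(2)] L1' L2 X_def c_def using True by simp
    also have "\<dots> = (w \<nu> m (\<beta> m) + c * w \<nu> m (Suc (\<beta> m))) * X"
      by (simp add: algebra_simps)
    also have "\<dots> = 0"
      using w_rec[where \<nu>=\<nu> and m=m and a="\<beta> m", OF assms(3)] unfolding c_def by simp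
    finally show ?thesis .
  next
    case False
    show ?thesis
    proof (cases "\<beta> m = d")
      case True
      then show ?thesis unfolding Lminus_split[OF assms(2)] L1' L2
        using Lminus_pow_vanish[OF assms(1), of \<nu>] by simp
    next
      case False
      then show ?thesis unfolding Lminus_split[OF assms(2)] L1' L2 using \<open>\<not> Suc (\<beta> m) \<le> d\<close> by simp
    qed
  qed
  then show "Lminus \<nu> m (CK \<nu> m d p) \<beta> = 0 \<beta>" by simp
qed

lemma CK_unique:
  assumes "1 \<le> m" "0 < \<nu> m" "Lminus \<nu> m g = 0" "\<And>\<alpha>. \<alpha> m = 0 \<Longrightarrow> g \<alpha> = 0"
  shows "g = 0"
proof -
  have "\<forall>\<alpha>. \<alpha> m = a \<longrightarrow> g \<alpha> = 0" for a
  proof (induction a)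
    case 0
    then show ?case using assms(4) by blast
  next
    case (Suc a)
    show ?case
    proof (intro allI impI)
      fix \<alpha> assume am: "\<alpha> m = Suc a"
      let ?\<beta> = "\<alpha>(m := a)"
      have z: "Lminus \<nu> (m - 1) g ?\<beta> = 0"
        unfolding Lminus_pt by (rule sum.neutral) (use Suc.IH in auto)
      have "0 = Lminus \<nu> m g ?\<beta>" using assms(3) by simp
      also have "\<dots> = (real a + 1) * (real a + 2 * \<nu> m) * g \<alpha>"
        unfolding Lminus_split[OF assms(1)] z using am by (simp add: fun_upd_idem)
      finally have "(real a + 1) * (real a + 2 * \<nu> m) * g \<alpha> = 0" by simp
      moreover have "(real a + 1) * (real a + 2 * \<nu> m) \<noteq> 0" using assms(2)
        by (metis add_pos_pos mult_pos_pos of_nat_0_le_iff add_nonneg_pos less_irrefl zero_less_one mult_2)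
      ultimately show "g \<alpha> = 0" by simp
    qed
  qed
  then show ?thesis by (auto simp: fun_eq_iff)
qed



lemma Lminus_pow_Lplus_pow:
  assumes "hom_poly m e h" "Lminus \<nu> m h = 0"
  shows "(Lminus \<nu> m ^^ a) ((Lplus m ^^ j) h) = pscale (\<Prod>i<a. kap \<nu> m e (j - i)) ((Lplus m ^^ (j - a)) h)"
proof (induction a)
  case 0
  then show ?case by (simp add: pscale_def)
next
  case (Suc a)
  have "(Lminus \<nu> m ^^ Suc a) ((Lplus m ^^ j) h) = Lminus \<nu> m ((Lminus \<nu> m ^^ a) ((Lplus m ^^ j) h))"
    by simp
  also have "\<dots> = pscale (\<Prod>i<a. kap \<nu> m e (j - i)) (pscale (kap \<nu> m e (j - a)) ((Lplus m ^^ (j - a - 1)) h))"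
    unfolding Suc.IH lin_scale[OF lin_Lminus] Lminus_Lplus_pow[OF assms] ..
  also have "\<dots> = pscale (\<Prod>i<Suc a. kap \<nu> m e (j - i)) ((Lplus m ^^ (j - Suc a)) h)"
    by (simp add: pscale_def fun_eq_iff mult.assoc)
  finally show ?case .
qed

lemma Ssum_pos: "1 \<le> m \<Longrightarrow> (\<And>i. i \<in> {1..m} \<Longrightarrow> 0 < \<nu> i) \<Longrightarrow> 0 < Ssum \<nu> m"
  unfolding Ssum_def by (rule sum_pos) auto

lemma pscale_eq_0: "pscale c p = 0 \<Longrightarrow> c \<noteq> 0 \<Longrightarrow> p = 0"
  by (auto simp: pscale_def fun_eq_iff)

lemma fischer_unique:
  assumes m: "1 \<le> m" and pos: "\<And>i. i \<in> {1..m} \<Longrightarrow> 0 < \<nu> i"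
    and hh: "\<And>j. hom_poly m (e j) (h j)" and hl: "\<And>j. Lminus \<nu> m (h j) = 0"
  shows "(\<Sum>j\<in>{0..N}. (Lplus m ^^ j) (h j)) = 0 \<Longrightarrow> \<forall>j\<le>N. h j = 0"
proof (induction N)
  case 0
  then show ?case by simp
next
  case (Suc N)
  have S: "0 < Ssum \<nu> m" by (rule Ssum_pos[OF m pos])
  have z: "(Lminus \<nu> m ^^ Suc N) (\<Sum>j\<in>{0..Suc N}. (Lplus m ^^ j) (h j)) = 0"
    unfolding Suc.prems by (rule lin_zero[OF lin_pow[OF lin_Lminus]])
  have "0 = (Lminus \<nu> m ^^ Suc N) (\<Sum>j\<in>{0..Suc N}. (Lplus m ^^ j) (h j))"
    using z by simp
  also have "\<dots> = (\<Sum>j\<in>{0..Suc N}. (Lminus \<nu> m ^^ Suc N) ((Lplus m ^^ j) (h j)))"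
    by (rule lin_sum[OF lin_pow[OF lin_Lminus]])
  also have "\<dots> = (\<Sum>j\<in>{0..Suc N}. pscale (\<Prod>i<Suc N. kap \<nu> m (e j) (j - i)) ((Lplus m ^^ (j - Suc N)) (h j)))"
    by (rule sum.cong[OF refl]) (rule Lminus_pow_Lplus_pow[OF hh hl])
  also have "\<dots> = pscale (\<Prod>i<Suc N. kap \<nu> m (e (Suc N)) (Suc N - i)) (h (Suc N))"
  proof -
    have z: "(\<Prod>i<Suc N. kap \<nu> m (e j) (j - i)) = 0" if "j \<in> {0..N}" for j
    proof (rule prod_zero)
      show "\<exists>i\<in>{..<Suc N}. kap \<nu> m (e j) (j - i) = 0"
        using that by (intro bexI[of _ j]) (auto simp: kap_def)
    qed simp
    have "(\<Sum>j\<in>{0..Suc N}. pscale (\<Prod>i<Suc N. kap \<nu> m (e j) (j - i)) ((Lplus m ^^ (j - Suc N)) (h j)))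
       = (\<Sum>j\<in>{0..N}. pscale (\<Prod>i<Suc N. kap \<nu> m (e j) (j - i)) ((Lplus m ^^ (j - Suc N)) (h j)))
         + pscale (\<Prod>i<Suc N. kap \<nu> m (e (Suc N)) (Suc N - i)) (h (Suc N))"
      by simp
    also have "(\<Sum>j\<in>{0..N}. pscale (\<Prod>i<Suc N. kap \<nu> m (e j) (j - i)) ((Lplus m ^^ (j - Suc N)) (h j))) = 0"
    proof (rule sum.neutral, intro ballI)
      fix j assume "j \<in> {0..N}"
      show "pscale (\<Prod>i<Suc N. kap \<nu> m (e j) (j - i)) ((Lplus m ^^ (j - Suc N)) (h j)) = 0"
        by (simp only: z[OF \<open>j \<in> {0..N}\<close>] pscale_0)
    qed
    finally show ?thesis by (simp only: add.left_neutral)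
  qed
  finally have z0: "pscale (\<Prod>i<Suc N. kap \<nu> m (e (Suc N)) (Suc N - i)) (h (Suc N)) = 0" by simp
  have nz: "kap \<nu> m (e (Suc N)) (Suc N - i) \<noteq> 0" if "i \<in> {..<Suc N}" for i
  proof -
    from that have "1 \<le> Suc N - i" by auto
    then have "1 \<le> real (Suc N - i)" by linarith
    then show "kap \<nu> m (e (Suc N)) (Suc N - i) \<noteq> 0"
      using S unfolding kap_def by (auto simp: add_pos_nonneg)
  qed
  have "(\<Prod>i<Suc N. kap \<nu> m (e (Suc N)) (Suc N - i)) \<noteq> 0"
    by (subst prod_zero_iff) (use nz in auto)
  then have hN: "h (Suc N) = 0" using pscale_eq_0[OF z0] by blast
  have s1: "(\<Sum>j\<in>{0..Suc N}. (Lplus m ^^ j) (h j)) = (\<Sum>j\<in>{0..N}. (Lplus m ^^ j) (h j)) + (Lplus m ^^ Suc N) (h (Suc N))"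
    by (rule sum.atLeast0_atMost_Suc)
  have s2: "(Lplus m ^^ Suc N) (h (Suc N)) = 0"
    unfolding hN by (rule lin_zero[OF lin_pow[OF lin_Lplus]])
  have "(\<Sum>j\<in>{0..N}. (Lplus m ^^ j) (h j)) = 0"
    using Suc.prems unfolding s1 s2 by (simp only: add_0_right)
  then have "\<forall>j\<le>N. h j = 0" by (rule Suc.IH)
  then show ?case using hN le_Suc_eq by blast
qed



definition arg :: "(nat \<Rightarrow> real) \<Rightarrow> (nat \<Rightarrow> nat) \<Rightarrow> nat \<Rightarrow> rpoly" where
  "arg \<nu> jj m = (if m = 2 then x1pow (jj 1) else (Lplus (m - 1) ^^ jj (m - 1)) (psiG \<nu> jj (m - 1)))"

lemma psi_arg:
  assumes "2 \<le> m" shows "psiG \<nu> jj m = CK \<nu> m (sum jj {1..m-1}) (arg \<nu> jj m)"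
proof -
  obtain k where k: "m = Suc (Suc k)" using assms by (metis add_2_eq_Suc le_Suc_ex)
  show ?thesis
  proof (cases k)
    case 0
    then show ?thesis using k by (simp add: arg_def numeral_2_eq_2)
  next
    case (Suc k')
    then show ?thesis using k by (simp add: arg_def numeral_2_eq_2 numeral_3_eq_3 add.commute)
  qed
qed

lemma x1pow_hom: "hom_poly 1 a (x1pow a)"
  unfolding hom_poly_def x1pow_def by auto

lemma hom_scale: "hom_poly m k p \<Longrightarrow> hom_poly m k (pscale c p)"
  unfolding hom_poly_def pscale_def by auto

lemma hom_sum: "(\<And>i. i \<in> A \<Longrightarrow> hom_poly m k (f i)) \<Longrightarrow> hom_poly m k (sum f A)"
  unfolding hom_poly_def
proof (intro allI impI)
  fix \<alpha> assume h: "\<And>i. i \<in> A \<Longrightarrow> \<forall>\<alpha>. f i \<alpha> \<noteq> 0 \<longrightarrow> (\<forall>l. \<alpha> l \<noteq> 0 \<longrightarrow> l \<in> {1..m}) \<and> sum \<alpha> {1..m} = k"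
    and nz: "sum f A \<alpha> \<noteq> 0"
  from nz have "(\<Sum>i\<in>A. f i \<alpha>) \<noteq> 0" by (simp add: sum_fun_app)
  then obtain i where "i \<in> A" "f i \<alpha> \<noteq> 0" by (meson sum.not_neutral_contains_not_neutral)
  then show "(\<forall>l. \<alpha> l \<noteq> 0 \<longrightarrow> l \<in> {1..m}) \<and> sum \<alpha> {1..m} = k" using h by blast
qed

lemma psi_props:
  assumes "2 \<le> m" "\<And>i. i \<in> {1..m} \<Longrightarrow> 0 < \<nu> i"
  shows "hom_poly (m - 1) (sum jj {1..m-1}) (arg \<nu> jj m) \<and> hom_poly m (sum jj {1..m-1}) (psiG \<nu> jj m)
     \<and> Lminus \<nu> m (psiG \<nu> jj m) = 0"
  using assms
proof (induction m rule: nat_induct_at_least)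
  case base
  have a: "hom_poly (2 - 1) (sum jj {1..2-1}) (arg \<nu> jj 2)"
    using x1pow_hom[of "jj 1"] by (simp add: arg_def)
  show ?case using a CK_hom[OF a] CK_null[OF a] base.prems psi_arg[of 2] by simp
next
  case (Suc m)
  have IH: "hom_poly m (sum jj {1..m-1}) (psiG \<nu> jj m)"
    using Suc.IH Suc.prems by simp
  have e: "sum jj {1..m-1} + jj m = sum jj {1..Suc m - 1}"
    using Suc.hyps by (cases m) (auto simp: add.commute)
  have a: "hom_poly (Suc m - 1) (sum jj {1..Suc m-1}) (arg \<nu> jj (Suc m))"
    using hom_Lplus_pow[OF IH, of "jj m"] Suc.hyps unfolding e by (simp add: arg_def)
  have pos: "0 < \<nu> (Suc m)" using Suc.prems by simp
  have n: "Lminus \<nu> (Suc m) (CK \<nu> (Suc m) (sum jj {1..Suc m-1}) (arg \<nu> jj (Suc m))) = 0"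
    by (rule CK_null[where m="Suc m" and \<nu>=\<nu>, OF a _ pos]) simp
  show ?case using a CK_hom[OF a] n psi_arg[of "Suc m"] Suc.hyps by simp
qed

lemma psi_cong:
  assumes "2 \<le> m" "\<And>i. i \<in> {1..m-1} \<Longrightarrow> jj i = jj' i"
  shows "psiG \<nu> jj m = psiG \<nu> jj' m \<and> arg \<nu> jj m = arg \<nu> jj' m"
  using assms
proof (induction m rule: nat_induct_at_least)
  case base
  then have "jj 1 = jj' 1" by simp
  then show ?case by (simp add: arg_def numeral_2_eq_2)
next
  case (Suc m)
  have "jj i = jj' i" if "i \<in> {1..m-1}" for i
  proof -
    have "i \<in> {1..Suc m - 1}" using that by auto
    then show ?thesis using Suc.prems by blast
  qed
  then have IH: "psiG \<nu> jj m = psiG \<nu> jj' m" using Suc.IH by blast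
  have "jj m = jj' m" using Suc.prems Suc.hyps by simp
  then have a: "arg \<nu> jj (Suc m) = arg \<nu> jj' (Suc m)"
    using IH Suc.hyps by (simp add: arg_def)
  have "sum jj {1..Suc m - 1} = sum jj' {1..Suc m - 1}"
    by (rule sum.cong) (use Suc.prems in auto)
  then show ?case using a psi_arg[of "Suc m" \<nu> jj] psi_arg[of "Suc m" \<nu> jj'] Suc.hyps by simp
qed



lemma finite_Jset: "finite (Jset n k)"
proof -
  have "Jset n k \<subseteq> {f. \<forall>x. (x \<in> {1..n-1} \<longrightarrow> f x \<in> {0..k}) \<and> (x \<notin> {1..n-1} \<longrightarrow> f x = 0)}"
  proof
    fix jj assume jj: "jj \<in> Jset n k"
    have "jj x \<le> k" if "x \<in> {1..n-1}" for x
    proof -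
      have "jj x \<le> sum jj {1..n-1}" by (rule member_le_sum) (use that in auto)
      then show ?thesis using jj unfolding Jset_def by simp
    qed
    then show "jj \<in> {f. \<forall>x. (x \<in> {1..n-1} \<longrightarrow> f x \<in> {0..k}) \<and> (x \<notin> {1..n-1} \<longrightarrow> f x = 0)}"
      using jj unfolding Jset_def by auto
  qed
  moreover have "finite {f. \<forall>x. (x \<in> {1..n-1} \<longrightarrow> f x \<in> {0..k}) \<and> (x \<notin> {1..n-1} \<longrightarrow> f x = (0::nat))}"
    by (rule finite_set_of_finite_funs) auto
  ultimately show ?thesis by (rule finite_subset)
qed

lemma Jset_m0: "jj \<in> Jset m k \<Longrightarrow> jj m = 0"
proof -
  assume "jj \<in> Jset m k"
  moreover have "m \<notin> {1..m-1}" by auto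
  ultimately show ?thesis unfolding Jset_def by blast
qed

lemma Jset_split1:
  assumes "1 \<le> m" "jj \<in> Jset (Suc m) d"
  shows "jj m \<le> d \<and> jj(m := 0) \<in> Jset m (d - jj m)"
proof -
  have e: "{1..m} = insert m {1..m-1}" using assms(1) by auto
  have nm: "m \<notin> {1..m-1}" by auto
  have s: "sum jj {1..m} = d" using assms(2) unfolding Jset_def by simp
  have "sum (jj(m := 0)) {1..m-1} = sum jj {1..m-1}" by (rule sum.cong) auto
  moreover have "sum jj {1..m} = jj m + sum jj {1..m-1}" unfolding e using nm by simp
  ultimately show ?thesis using s assms(2) unfolding Jset_def by auto
qed

lemma Jset_split2:
  assumes "1 \<le> m" "j \<le> d" "jj \<in> Jset m (d - j)"
  shows "jj(m := j) \<in> Jset (Suc m) d"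
proof -
  have e: "{1..m} = insert m {1..m-1}" using assms(1) by auto
  have nm: "m \<notin> {1..m-1}" by auto
  have "sum (jj(m := j)) {1..m-1} = sum jj {1..m-1}" by (rule sum.cong) auto
  then have "sum (jj(m := j)) {1..m} = j + (d - j)" unfolding e using nm assms(3) unfolding Jset_def by simp
  then show ?thesis using assms unfolding Jset_def by auto
qed

lemma pscale_zero_right[simp]: "pscale c 0 = 0" by (simp add: pscale_def fun_eq_iff)

definition indep_fam :: "('i \<Rightarrow> rpoly) \<Rightarrow> 'i set \<Rightarrow> bool" where
  "indep_fam b I \<longleftrightarrow> (\<forall>c. (\<Sum>i\<in>I. pscale (c i) (b i)) = 0 \<longrightarrow> (\<forall>i\<in>I. c i = 0))"

lemma sum_app_scale: "(\<Sum>i\<in>I. pscale (c i) (b i)) \<alpha> = (\<Sum>i\<in>I. c i * b i \<alpha>)"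
  by (simp add: sum_fun_app pscale_app)

lemma arg_to_psi:
  assumes "2 \<le> m" "\<And>i. i \<in> {1..m} \<Longrightarrow> 0 < \<nu> i" "indep_fam (\<lambda>jj. arg \<nu> jj m) (Jset m d)"
  shows "indep_fam (\<lambda>jj. psiG \<nu> jj m) (Jset m d)"
  unfolding indep_fam_def
proof (intro allI impI)
  fix c assume z: "(\<Sum>jj\<in>Jset m d. pscale (c jj) (psiG \<nu> jj m)) = 0"
  have pm: "0 < \<nu> m" using assms by simp
  have "(\<Sum>jj\<in>Jset m d. pscale (c jj) (arg \<nu> jj m)) = 0"
  proof (rule ext)
    fix \<alpha>
    show "(\<Sum>jj\<in>Jset m d. pscale (c jj) (arg \<nu> jj m)) \<alpha> = 0 \<alpha>"
    proof (cases "\<alpha> m = 0")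
      case True
      have "(\<Sum>jj\<in>Jset m d. pscale (c jj) (arg \<nu> jj m)) \<alpha> = (\<Sum>jj\<in>Jset m d. pscale (c jj) (psiG \<nu> jj m)) \<alpha>"
        unfolding sum_app_scale
      proof (rule sum.cong[OF refl])
        fix jj assume "jj \<in> Jset m d"
        have h: "hom_poly (m - 1) (sum jj {1..m-1}) (arg \<nu> jj m)" using psi_props[where \<nu>=\<nu>, OF assms(1) assms(2)] by blast
        show "c jj * arg \<nu> jj m \<alpha> = c jj * psiG \<nu> jj m \<alpha>"
          using CK_restrict[where \<nu>=\<nu> and m=m and \<alpha>=\<alpha>, OF h _ pm True] psi_arg[OF assms(1)] assms(1) by simp
      qed
      then show ?thesis using z by simp
    next
      case False
      have "arg \<nu> jj m \<alpha> = 0" for jj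
      proof (rule ccontr)
        assume "arg \<nu> jj m \<alpha> \<noteq> 0"
        moreover have h: "hom_poly (m - 1) (sum jj {1..m-1}) (arg \<nu> jj m)" using psi_props[where \<nu>=\<nu>, OF assms(1) assms(2)] by blast
        ultimately have "\<alpha> m = 0" using hom_nox[OF h] assms(1) by simp
        then show False using False by simp
      qed
      then show ?thesis unfolding sum_app_scale by simp
    qed
  qed
  then show "\<forall>jj\<in>Jset m d. c jj = 0" using assms(3) unfolding indep_fam_def by blast
qed

lemma psi_to_arg:
  assumes "2 \<le> m" "\<And>i. i \<in> {1..m} \<Longrightarrow> 0 < \<nu> i" "indep_fam (\<lambda>jj. psiG \<nu> jj m) (Jset m d)"
  shows "indep_fam (\<lambda>jj. arg \<nu> jj m) (Jset m d)"
  unfolding indep_fam_def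
proof (intro allI impI)
  fix c assume z: "(\<Sum>jj\<in>Jset m d. pscale (c jj) (arg \<nu> jj m)) = 0"
  have pm: "0 < \<nu> m" using assms by simp
  define g where "g = (\<Sum>jj\<in>Jset m d. pscale (c jj) (psiG \<nu> jj m))"
  have "Lminus \<nu> m g = (\<Sum>jj\<in>Jset m d. pscale (c jj) (Lminus \<nu> m (psiG \<nu> jj m)))"
    unfolding g_def lin_sum[OF lin_Lminus] lin_scale[OF lin_Lminus] ..
  also have "\<dots> = 0" using psi_props[where \<nu>=\<nu>, OF assms(1) assms(2)] by simp
  finally have Lg: "Lminus \<nu> m g = 0" .
  have "g \<alpha> = 0" if "\<alpha> m = 0" for \<alpha>
  proof -
    have "g \<alpha> = (\<Sum>jj\<in>Jset m d. pscale (c jj) (arg \<nu> jj m)) \<alpha>"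
      unfolding g_def sum_app_scale
    proof (rule sum.cong[OF refl])
      fix jj assume "jj \<in> Jset m d"
      have h: "hom_poly (m - 1) (sum jj {1..m-1}) (arg \<nu> jj m)" using psi_props[where \<nu>=\<nu>, OF assms(1) assms(2)] by blast
      show "c jj * psiG \<nu> jj m \<alpha> = c jj * arg \<nu> jj m \<alpha>"
        using CK_restrict[where \<nu>=\<nu> and m=m and \<alpha>=\<alpha>, OF h _ pm that] psi_arg[OF assms(1)] assms(1) by simp
    qed
    then show ?thesis using z by simp
  qed
  then have "g = 0" using CK_unique[of m \<nu> g] Lg pm assms(1) by simp
  then show "\<forall>jj\<in>Jset m d. c jj = 0" using assms(3) unfolding indep_fam_def g_def by blast
qed



lemma Jset2: "Jset 2 d = {(\<lambda>_. 0)(1 := d)}"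
proof
  show "Jset 2 d \<subseteq> {(\<lambda>_. 0)(1 := d)}"
  proof
    fix jj assume jj: "jj \<in> Jset 2 d"
    have "jj = (\<lambda>_. 0)(1 := d)"
    proof (rule ext)
      fix i show "jj i = ((\<lambda>_. 0)(1 := d)) i"
        using jj unfolding Jset_def by (cases "i = 1") auto
    qed
    then show "jj \<in> {(\<lambda>_. 0)(1 := d)}" by simp
  qed
next
  show "{(\<lambda>_. 0)(1 := d)} \<subseteq> Jset 2 d" unfolding Jset_def by auto
qed

lemma indep_base: "indep_fam (\<lambda>jj. arg \<nu> jj 2) (Jset 2 d)"
  unfolding indep_fam_def Jset2
proof (intro allI impI ballI)
  fix c and jj :: "nat \<Rightarrow> nat" assume z: "(\<Sum>i\<in>{(\<lambda>_. 0)(1 := d)}. pscale (c i) (arg \<nu> i 2)) = 0"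
    and jj: "jj \<in> {(\<lambda>_. 0)(1 := d)}"
  let ?j = "(\<lambda>_. 0::nat)(1 := d)"
  have "pscale (c ?j) (x1pow d) ?j = 0" using z by (simp add: arg_def)
  then show "c jj = 0" using jj by (simp add: pscale_app x1pow_def)
qed

lemma indep_step:
  assumes m2: "2 \<le> m" and pos: "\<And>i. i \<in> {1..Suc m} \<Longrightarrow> 0 < \<nu> i"
    and IH: "\<And>d. indep_fam (\<lambda>jj. psiG \<nu> jj m) (Jset m d)"
  shows "indep_fam (\<lambda>jj. arg \<nu> jj (Suc m)) (Jset (Suc m) d)"
  unfolding indep_fam_def
proof (intro allI impI)
  fix c assume z: "(\<Sum>jj\<in>Jset (Suc m) d. pscale (c jj) (arg \<nu> jj (Suc m))) = 0"
  have m1: "1 \<le> m" using m2 by simp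
  have posm: "\<And>i. i \<in> {1..m} \<Longrightarrow> 0 < \<nu> i" using pos by simp
  define \<phi> where "\<phi> = (\<lambda>(j, jj'::nat \<Rightarrow> nat). jj'(m := j))"
  define Sg where "Sg = (SIGMA j:{0..d}. Jset m (d - j))"
  have img: "Jset (Suc m) d = \<phi> ` Sg"
  proof
    show "Jset (Suc m) d \<subseteq> \<phi> ` Sg"
    proof
      fix jj assume jj: "jj \<in> Jset (Suc m) d"
      have "(jj m, jj(m := 0)) \<in> Sg" using Jset_split1[OF m1 jj] unfolding Sg_def by auto
      moreover have "jj = \<phi> (jj m, jj(m := 0))" unfolding \<phi>_def by simp
      ultimately show "jj \<in> \<phi> ` Sg" by blast
    qed
  next
    show "\<phi> ` Sg \<subseteq> Jset (Suc m) d"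
      unfolding Sg_def \<phi>_def using Jset_split2[OF m1] by auto
  qed
  have inj: "inj_on \<phi> Sg"
  proof (rule inj_onI)
    fix x y assume x: "x \<in> Sg" and y: "y \<in> Sg" and e: "\<phi> x = \<phi> y"
    obtain j a where xa: "x = (j, a)" "a \<in> Jset m (d - j)" using x unfolding Sg_def by auto
    obtain j' b where yb: "y = (j', b)" "b \<in> Jset m (d - j')" using y unfolding Sg_def by auto
    have e': "a(m := j) = b(m := j')" using e xa yb unfolding \<phi>_def by simp
    then have "j = j'" by (metis fun_upd_same)
    moreover have "a = b"
    proof -
      have "a = (a(m := j))(m := 0)" using Jset_m0[OF xa(2)] by (simp add: fun_upd_idem)
      also have "\<dots> = (b(m := j'))(m := 0)" using e' by simp
      also have "\<dots> = b" using Jset_m0[OF yb(2)] by (simp add: fun_upd_idem)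
      finally show ?thesis .
    qed
    ultimately show "x = y" using xa yb by simp
  qed
  define h where "h j = (\<Sum>jj'\<in>Jset m (d - j). pscale (c (jj'(m := j))) (psiG \<nu> jj' m))" for j
  have tmq: "pscale (c (jj'(m := j))) (arg \<nu> (jj'(m := j)) (Suc m)) = (Lplus m ^^ j) (pscale (c (jj'(m := j))) (psiG \<nu> jj' m))"
    for j jj'
  proof -
    have "(jj'(m := j)) i = jj' i" if "i \<in> {1..m-1}" for i using that by auto
    then have "psiG \<nu> (jj'(m := j)) m = psiG \<nu> jj' m" using psi_cong[OF m2, of "jj'(m := j)" jj' \<nu>] by blast
    then have "arg \<nu> (jj'(m := j)) (Suc m) = (Lplus m ^^ j) (psiG \<nu> jj' m)"
      using m2 by (simp add: arg_def)
    then show ?thesis by (simp add: lin_scale[OF lin_pow[OF lin_Lplus]])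
  qed
  have "0 = (\<Sum>jj\<in>Jset (Suc m) d. pscale (c jj) (arg \<nu> jj (Suc m)))" using z by simp
  also have "\<dots> = (\<Sum>x\<in>Sg. pscale (c (\<phi> x)) (arg \<nu> (\<phi> x) (Suc m)))"
    unfolding img by (rule sum.reindex[OF inj, unfolded comp_def])
  also have "\<dots> = (\<Sum>j\<in>{0..d}. \<Sum>jj'\<in>Jset m (d - j). pscale (c (jj'(m := j))) (arg \<nu> (jj'(m := j)) (Suc m)))"
    unfolding Sg_def \<phi>_def by (subst sum.Sigma) (auto simp: finite_Jset split_def intro!: sum.cong)
  also have "\<dots> = (\<Sum>j\<in>{0..d}. (Lplus m ^^ j) (h j))"
    unfolding tmq h_def lin_sum[OF lin_pow[OF lin_Lplus]] ..
  finally have S0: "(\<Sum>j\<in>{0..d}. (Lplus m ^^ j) (h j)) = 0" by simp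
  have hh: "hom_poly m (d - j) (h j)" for j
    unfolding h_def
  proof (rule hom_sum, rule hom_scale)
    fix jj' assume "jj' \<in> Jset m (d - j)"
    then have "sum jj' {1..m-1} = d - j" unfolding Jset_def by simp
    then show "hom_poly m (d - j) (psiG \<nu> jj' m)" using psi_props[where \<nu>=\<nu>, OF m2 posm] by metis
  qed
  have hl: "Lminus \<nu> m (h j) = 0" for j
    unfolding h_def lin_sum[OF lin_Lminus] lin_scale[OF lin_Lminus]
    using psi_props[where \<nu>=\<nu>, OF m2 posm] by simp
  have hz: "\<forall>j\<le>d. h j = 0"
    by (rule fischer_unique[OF m1 posm hh hl S0])
  show "\<forall>jj\<in>Jset (Suc m) d. c jj = 0"
  proof
    fix jj assume jj: "jj \<in> Jset (Suc m) d"
    have s: "jj m \<le> d" "jj(m := 0) \<in> Jset m (d - jj m)" using Jset_split1[OF m1 jj] by auto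
    have "h (jj m) = 0" using hz s(1) by simp
    then have "\<forall>jj'\<in>Jset m (d - jj m). c (jj'(m := jj m)) = 0"
      using spec[OF IH[of "d - jj m", unfolded indep_fam_def], of "\<lambda>jj'. c (jj'(m := jj m))"]
      unfolding h_def by simp
    then have "c ((jj(m := 0))(m := jj m)) = 0" using s(2) by blast
    then show "c jj = 0" by simp
  qed
qed

lemma indep_all:
  assumes "2 \<le> m" "\<And>i. i \<in> {1..m} \<Longrightarrow> 0 < \<nu> i"
  shows "indep_fam (\<lambda>jj. psiG \<nu> jj m) (Jset m d)"
  using assms
proof (induction m arbitrary: d rule: nat_induct_at_least)
  case base
  show ?case by (rule arg_to_psi[OF _ base.prems indep_base]) simp
next
  case (Suc m)
  have IH: "\<And>d. indep_fam (\<lambda>jj. psiG \<nu> jj m) (Jset m d)" using Suc.IH Suc.prems by simp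
  show ?case by (rule arg_to_psi[OF _ Suc.prems indep_step[OF Suc.hyps Suc.prems IH]]) (use Suc.hyps in simp)
qed



interpretation V: vector_space pscale
  by unfold_locales (auto simp: pscale_def fun_eq_iff algebra_simps)

lemma indep_fam_inj:
  assumes "indep_fam b I" "finite I"
  shows "inj_on b I"
proof (rule inj_onI)
  fix x y assume x: "x \<in> I" and y: "y \<in> I" and e: "b x = b y"
  show "x = y"
  proof (rule ccontr)
    assume ne: "x \<noteq> y"
    define c where "c i = (if i = x then 1 else 0) - (if i = y then 1 else (0::real))" for i
    have "(\<Sum>i\<in>I. pscale (c i) (b i)) = 0"
    proof (rule ext)
      fix \<alpha>
      have "(\<Sum>i\<in>I. pscale (c i) (b i)) \<alpha> = (\<Sum>i\<in>I. (if i = x then b i \<alpha> else 0)) - (\<Sum>i\<in>I. (if i = y then b i \<alpha> else 0))"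
        unfolding sum_app_scale c_def sum_subtractf[symmetric] by (rule sum.cong) auto
      also have "\<dots> = b x \<alpha> - b y \<alpha>" using x y assms(2) by simp
      finally show "(\<Sum>i\<in>I. pscale (c i) (b i)) \<alpha> = 0 \<alpha>" using e by simp
    qed
    then have "c x = 0" using assms(1) x unfolding indep_fam_def by blast
    then show False using ne by (simp add: c_def)
  qed
qed

lemma indep_fam_independent:
  assumes "indep_fam b I" "finite I"
  shows "\<not> module.dependent pscale (b ` I)"
proof
  assume "module.dependent pscale (b ` I)"
  then obtain u where u: "\<exists>v\<in>b ` I. u v \<noteq> 0" "(\<Sum>v\<in>b ` I. pscale (u v) v) = 0"
    using V.dependent_finite[of "b ` I"] assms(2) by auto
  have inj: "inj_on b I" by (rule indep_fam_inj[OF assms])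
  have "(\<Sum>i\<in>I. pscale (u (b i)) (b i)) = 0"
    using u(2) unfolding sum.reindex[OF inj] by (simp add: comp_def)
  then have "\<forall>i\<in>I. u (b i) = 0" using spec[OF assms(1)[unfolded indep_fam_def], of "\<lambda>i. u (b i)"] by blast
  then show False using u(1) by auto
qed

lemma HBG_subspace: "V.subspace (HBG \<nu> n k)"
  unfolding V.subspace_def HBG_def
proof (intro conjI ballI allI)
  show "0 \<in> {p. hom_poly n k p \<and> Lminus \<nu> n p = 0}"
    by (simp add: hom_poly_def lin_zero[OF lin_Lminus])
next
  fix x y assume x: "x \<in> {p. hom_poly n k p \<and> Lminus \<nu> n p = 0}" and y: "y \<in> {p. hom_poly n k p \<and> Lminus \<nu> n p = 0}"
  have "hom_poly n k (x + y)"
    using hom_sum[of "{0::nat,1}" n k "\<lambda>i. if i = 0 then x else y"] x y by simp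
  then show "x + y \<in> {p. hom_poly n k p \<and> Lminus \<nu> n p = 0}"
    using x y by (simp add: lin_add[OF lin_Lminus])
next
  fix c x assume x: "x \<in> {p. hom_poly n k p \<and> Lminus \<nu> n p = 0}"
  then show "pscale c x \<in> {p. hom_poly n k p \<and> Lminus \<nu> n p = 0}"
    by (simp add: hom_scale lin_scale[OF lin_Lminus])
qed



lemma restrict_hom:
  assumes "hom_poly n k f" "1 \<le> n"
  shows "hom_poly (n - 1) k (\<lambda>\<alpha>. if \<alpha> n = 0 then f \<alpha> else 0)"
  unfolding hom_poly_def
proof (intro allI impI)
  fix \<alpha> assume nz: "(if \<alpha> n = 0 then f \<alpha> else 0) \<noteq> 0"
  then have an: "\<alpha> n = 0" and fa: "f \<alpha> \<noteq> 0" by (auto split: if_splits)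
  from fa have s: "\<forall>i. \<alpha> i \<noteq> 0 \<longrightarrow> i \<in> {1..n}" and sk: "sum \<alpha> {1..n} = k"
    using assms(1) unfolding hom_poly_def by blast+
  have "\<forall>i. \<alpha> i \<noteq> 0 \<longrightarrow> i \<in> {1..n-1}"
  proof (intro allI impI)
    fix i assume "\<alpha> i \<noteq> 0"
    then have "i \<in> {1..n}" "i \<noteq> n" using s an by auto
    then show "i \<in> {1..n-1}" by auto
  qed
  moreover have "sum \<alpha> {1..n-1} = k"
  proof -
    have e: "{1..n} = insert n {1..n-1}" using assms(2) by auto
    have "n \<notin> {1..n-1}" by auto
    then show ?thesis using sk an unfolding e by simp
  qed
  ultimately show "(\<forall>i. \<alpha> i \<noteq> 0 \<longrightarrow> i \<in> {1..n - 1}) \<and> sum \<alpha> {1..n - 1} = k" by blast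
qed

lemma poly_span_monos:
  assumes "hom_poly (n - 1) k p"
  shows "p \<in> V.span ((\<lambda>\<beta>. (\<lambda>\<alpha>. if \<alpha> = \<beta> then 1 else 0 :: real)) ` Jset n k)"
proof -
  let ?mono = "\<lambda>\<beta>. (\<lambda>\<alpha>. if \<alpha> = \<beta> then 1 else 0 :: real)"
  have "p = (\<Sum>\<beta>\<in>Jset n k. pscale (p \<beta>) (?mono \<beta>))"
  proof (rule ext)
    fix \<alpha>
    have "(\<Sum>\<beta>\<in>Jset n k. pscale (p \<beta>) (?mono \<beta>)) \<alpha> = (\<Sum>\<beta>\<in>Jset n k. if \<alpha> = \<beta> then p \<beta> else 0)"
      unfolding sum_app_scale by (rule sum.cong) auto
    also have "\<dots> = (if \<alpha> \<in> Jset n k then p \<alpha> else 0)"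
      using finite_Jset by simp
    also have "\<dots> = p \<alpha>"
    proof (cases "p \<alpha> = 0")
      case False
      then have "(\<forall>i. \<alpha> i \<noteq> 0 \<longrightarrow> i \<in> {1..n-1}) \<and> sum \<alpha> {1..n-1} = k"
        using assms unfolding hom_poly_def by blast
      then have "\<alpha> \<in> Jset n k" unfolding Jset_def by auto
      then show ?thesis by simp
    qed simp
    finally show "p \<alpha> = (\<Sum>\<beta>\<in>Jset n k. pscale (p \<beta>) (?mono \<beta>)) \<alpha>" by simp
  qed
  also have "\<dots> \<in> V.span (?mono ` Jset n k)"
    by (intro V.span_sum V.span_scale V.span_base) auto
  finally show ?thesis .
qed

theorem theorem4p3:
  fixes n k :: nat and \<nu> :: "nat \<Rightarrow> real"
  assumes "n \<ge> 2"
    and "\<And>i. i \<in> {1..n} \<Longrightarrow> \<nu> i > 0"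
  shows "is_basis_family (\<lambda>jj. psiG \<nu> jj n) (Jset n k) (HBG \<nu> n k)"
proof -
  let ?J = "Jset n k"
  let ?\<psi> = "\<lambda>jj. psiG \<nu> jj n"
  let ?a = "\<lambda>jj. arg \<nu> jj n"
  have n1: "1 \<le> n" using assms(1) by simp
  have pn: "0 < \<nu> n" using assms by simp
  have fin: "finite ?J" by (rule finite_Jset)
  have ind: "indep_fam ?\<psi> ?J" by (rule indep_all[OF assms])
  have inda: "indep_fam ?a ?J" by (rule psi_to_arg[OF assms ind])
  have props: "hom_poly (n - 1) k (?a jj) \<and> hom_poly n k (?\<psi> jj) \<and> Lminus \<nu> n (?\<psi> jj) = 0" if "jj \<in> ?J" for jj
  proof -
    have "sum jj {1..n-1} = k" using that unfolding Jset_def by simp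
    then show ?thesis using psi_props[where \<nu>=\<nu> and jj=jj, OF assms] by simp
  qed
  have sub: "?\<psi> ` ?J \<subseteq> HBG \<nu> n k" using props unfolding HBG_def by auto
  have inj: "inj_on ?\<psi> ?J" by (rule indep_fam_inj[OF ind fin])
  have indep: "\<not> module.dependent pscale (?\<psi> ` ?J)" by (rule indep_fam_independent[OF ind fin])
  have span1: "V.span (?\<psi> ` ?J) \<subseteq> HBG \<nu> n k" by (rule V.span_minimal[OF sub HBG_subspace])
  have span2: "HBG \<nu> n k \<subseteq> V.span (?\<psi> ` ?J)"
  proof
    fix f assume f: "f \<in> HBG \<nu> n k"
    let ?P = "{p. hom_poly (n - 1) k p}"
    let ?mono = "\<lambda>\<beta>. (\<lambda>\<alpha>. if \<alpha> = \<beta> then 1 else 0 :: real)"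
    have PM: "?P \<subseteq> V.span (?mono ` ?J)" using poly_span_monos by blast
    have finM: "finite (?mono ` ?J)" using fin by simp
    have cM: "card (?mono ` ?J) \<le> card (?a ` ?J)"
      using card_image_le[OF fin, of ?mono] card_image[OF indep_fam_inj[OF inda fin]] by simp
    have AP: "?a ` ?J \<subseteq> ?P"
    proof
      fix y assume "y \<in> ?a ` ?J"
      then obtain jj where "jj \<in> ?J" "y = ?a jj" by blast
      then show "y \<in> ?P" using props by simp
    qed
    have Aind: "\<not> V.dependent (?a ` ?J)" by (rule indep_fam_independent[OF inda fin])
    have PA: "?P \<subseteq> V.span (?a ` ?J)"
    proof
      fix x assume xP: "x \<in> ?P"
      show "x \<in> V.span (?a ` ?J)"
      proof (rule ccontr)
        assume xn: "x \<notin> V.span (?a ` ?J)"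
        have I: "\<not> V.dependent (insert x (?a ` ?J))" by (rule V.independent_insertI[OF xn Aind])
        have xA: "x \<notin> ?a ` ?J"
        proof
          assume "x \<in> ?a ` ?J"
          then have "x \<in> V.span (?a ` ?J)" by (rule V.span_base)
          then show False using xn by contradiction
        qed
        have S1: "x \<in> V.span (?mono ` ?J)" using PM xP by (rule subsetD)
        have S2: "?a ` ?J \<subseteq> V.span (?mono ` ?J)" using AP PM by (rule subset_trans)
        have S: "insert x (?a ` ?J) \<subseteq> V.span (?mono ` ?J)" using S1 S2 by (rule insert_subsetI)
        have "card (insert x (?a ` ?J)) \<le> card (?mono ` ?J)"
          using V.independent_span_bound[OF finM I S] by simp
        moreover have "card (insert x (?a ` ?J)) = Suc (card (?a ` ?J))" using xA fin by simp
        ultimately show False using cM by simp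
      qed
    qed
    define rf where "rf = (\<lambda>\<alpha>. if \<alpha> n = 0 then f \<alpha> else (0::real))"
    have "hom_poly (n - 1) k rf" unfolding rf_def
      by (rule restrict_hom[OF _ n1]) (use f in \<open>simp add: HBG_def\<close>)
    then have "rf \<in> V.span (?a ` ?J)" using PA by blast
    then obtain u where u: "rf = (\<Sum>v\<in>?a ` ?J. pscale (u v) v)"
      using V.span_finite[of "?a ` ?J"] fin by auto
    have u2: "rf = (\<Sum>jj\<in>?J. pscale (u (?a jj)) (?a jj))"
      using u unfolding sum.reindex[OF indep_fam_inj[OF inda fin]] by (simp add: comp_def)
    define g where "g = f - (\<Sum>jj\<in>?J. pscale (u (?a jj)) (?\<psi> jj))"
    have "Lminus \<nu> n g = Lminus \<nu> n f - (\<Sum>jj\<in>?J. pscale (u (?a jj)) (Lminus \<nu> n (?\<psi> jj)))"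
      unfolding g_def lin_diff[OF lin_Lminus] lin_sum[OF lin_Lminus] lin_scale[OF lin_Lminus] ..
    also have "\<dots> = 0" using f props unfolding HBG_def by simp
    finally have Lg: "Lminus \<nu> n g = 0" .
    have g0: "g \<alpha> = 0" if an: "\<alpha> n = 0" for \<alpha>
    proof -
      have "(\<Sum>jj\<in>?J. pscale (u (?a jj)) (?\<psi> jj)) \<alpha> = (\<Sum>jj\<in>?J. pscale (u (?a jj)) (?a jj)) \<alpha>"
        unfolding sum_app_scale
      proof (rule sum.cong[OF refl])
        fix jj assume jj: "jj \<in> ?J"
        have h: "hom_poly (n - 1) (sum jj {1..n-1}) (?a jj)"
          using psi_props[where \<nu>=\<nu> and jj=jj, OF assms] by blast
        show "u (?a jj) * ?\<psi> jj \<alpha> = u (?a jj) * ?a jj \<alpha>"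
          using CK_restrict[where \<nu>=\<nu> and m=n and \<alpha>=\<alpha>, OF h n1 pn an] psi_arg[OF assms(1)] by simp
      qed
      also have "\<dots> = rf \<alpha>" using u2 by simp
      also have "\<dots> = f \<alpha>" using an by (simp add: rf_def)
      finally show ?thesis unfolding g_def by simp
    qed
    have "g = 0" by (rule CK_unique[OF n1 pn Lg g0])
    then have "f = (\<Sum>jj\<in>?J. pscale (u (?a jj)) (?\<psi> jj))" unfolding g_def by simp
    also have "\<dots> \<in> V.span (?\<psi> ` ?J)"
      by (intro V.span_sum V.span_scale V.span_base) auto
    finally show "f \<in> V.span (?\<psi> ` ?J)" .
  qed
  show ?thesis unfolding is_basis_family_def
    using sub inj indep span1 span2 by blast
qed

end
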